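(* Let $\pi_+\in(0,1)$, $\pi_-=1-\pi_+$, and let $p_+,p_-$ be probability densities on a feature space $\mathcal{X}$. Define $$\widetilde{p}_+(\boldsymbol{x})=\frac{\pi_+}{\pi_-^2+\pi_+}p_+(\boldsymbol{x})+\frac{\pi_-^2}{\pi_-^2+\pi_+}p_-(\boldsymbol{x}),\qquad \widetilde{p}_-(\boldsymbol{x})=\frac{\pi_+^2}{\pi_+^2+\pi_-}p_+(\boldsymbol{x})+\frac{\pi_-}{\pi_+^2+\pi_-}p_-(\boldsymbol{x}).$$ Then $$p_+(\boldsymbol{x})=\frac{1}{\pi_+}\big(\widetilde{p}_+(\boldsymbol{x})-\pi_-\widetilde{p}_-(\boldsymbol{x})\big),\qquad p_-(\boldsymbol{x})=\frac{1}{\pi_-}\big(\widetilde{p}_-(\boldsymbol{x})-\pi_+\widetilde{p}_+(\boldsymbol{x})\big).$$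
   Context: Here $\pi_+,\pi_-$ are the positive/negative class priors and $p_+,p_-$ the class-conditional densities of a binary classification problem; $\widetilde{p}_+,\widetilde{p}_-$ are the marginal densities of the first and second components of pairwise comparison data. *)

theory Defs
  imports "HOL-Analysis.Analysis"
begin

definition prob_density :: "'a measure \<Rightarrow> ('a \<Rightarrow> real) \<Rightarrow> bool" where
  "prob_density M p \<longleftrightarrow> p \<in> borel_measurable M \<and> (\<forall>x\<in>space M. 0 \<le> p x)
     \<and> integrable M p \<and> integral\<^sup>L M p = 1"

text \<open>Marginal densities of the two components of pairwise comparison data.\<close>
definition ptilde_pos :: "real \<Rightarrow> ('a \<Rightarrow> real) \<Rightarrow> ('a \<Rightarrow> real) \<Rightarrow> 'a \<Rightarrow> real" where
  "ptilde_pos \<pi>p pp pn x =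
     (let \<pi>n = 1 - \<pi>p in
      \<pi>p / (\<pi>n^2 + \<pi>p) * pp x + \<pi>n^2 / (\<pi>n^2 + \<pi>p) * pn x)"

definition ptilde_neg :: "real \<Rightarrow> ('a \<Rightarrow> real) \<Rightarrow> ('a \<Rightarrow> real) \<Rightarrow> 'a \<Rightarrow> real" where
  "ptilde_neg \<pi>p pp pn x =
     (let \<pi>n = 1 - \<pi>p in
      \<pi>p^2 / (\<pi>p^2 + \<pi>n) * pp x + \<pi>n / (\<pi>p^2 + \<pi>n) * pn x)"

end

theory Submission
  imports Defs
begin

theorem lemma1:
  fixes M :: "'a measure" and \<pi>p \<pi>n :: real and pp pn :: "'a \<Rightarrow> real" and x :: 'a
  assumes "0 < \<pi>p" and "\<pi>p < 1" and "\<pi>n = 1 - \<pi>p"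
    and "prob_density M pp" and "prob_density M pn"
  shows "pp x = 1 / \<pi>p * (ptilde_pos \<pi>p pp pn x - \<pi>n * ptilde_neg \<pi>p pp pn x)
       \<and> pn x = 1 / \<pi>n * (ptilde_neg \<pi>p pp pn x - \<pi>p * ptilde_pos \<pi>p pp pn x)"
proof -
  define D where "D = (1 - \<pi>p)^2 + \<pi>p"
  have D2: "\<pi>p^2 + (1 - \<pi>p) = D" unfolding D_def by (simp add: power2_eq_square algebra_simps)
  have Dpos: "D > 0" unfolding D_def using assms(1) by (smt (verit) zero_le_power2)
  have n0: "\<pi>n \<noteq> 0" using assms by simp
  have P: "ptilde_pos \<pi>p pp pn x = (\<pi>p * pp x + (1-\<pi>p)^2 * pn x) / D"
    unfolding ptilde_pos_def D_def Let_def by (simp add: add_divide_distrib)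
  have N: "ptilde_neg \<pi>p pp pn x = (\<pi>p^2 * pp x + (1-\<pi>p) * pn x) / D"
    unfolding ptilde_neg_def Let_def D2 by (simp add: add_divide_distrib)
  have DD: "D = 1 - \<pi>p + \<pi>p^2" unfolding D_def by (simp add: power2_eq_square algebra_simps)
  have "D * (ptilde_pos \<pi>p pp pn x - \<pi>n * ptilde_neg \<pi>p pp pn x) = D * (\<pi>p * pp x)"
    unfolding P N assms(3) using Dpos by (simp add: right_diff_distrib) (simp add: DD power2_eq_square algebra_simps)
  hence e1: "ptilde_pos \<pi>p pp pn x - \<pi>n * ptilde_neg \<pi>p pp pn x = \<pi>p * pp x" using Dpos by simp
  have "D * (ptilde_neg \<pi>p pp pn x - \<pi>p * ptilde_pos \<pi>p pp pn x) = D * (\<pi>n * pn x)"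
    unfolding P N assms(3) using Dpos by (simp add: right_diff_distrib) (simp add: DD power2_eq_square algebra_simps)
  hence e2: "ptilde_neg \<pi>p pp pn x - \<pi>p * ptilde_pos \<pi>p pp pn x = \<pi>n * pn x" using Dpos by simp
  show ?thesis unfolding e1 e2 using assms(1) n0 by simp
qed

end
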